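(* Let $n\ge 2$, $M_1\in\mathbb N^+$, $\gamma$ Euler's constant, and $M=\lceil e(\log(n-1)+\gamma)\rceil+M_1$. Then $$\sum_{m=M+1}^{n}\frac{s_u(n,m)}{n!}\le\exp(-M_1),$$ i.e. the probability $P(s_u(n,m>M))$ that a uniformly random permutation of $\{1,\dots,n\}$ has more than $M$ cycles is at most $\exp(-M_1)$.
   Context: $s_u(n,m)$ denotes the unsigned Stirling number of the first kind (the number of permutations of $\{1,\dots,n\}$ with exactly $m$ cycles), and $P(s_u(n,m))=s_u(n,m)/n!$. $\log$ is the natural logarithm. *)

theory Defs
  imports "HOL-Analysis.Analysis" "HOL-Combinatorics.Stirling"
begin

end

theory Submission
  imports Defs
begin

lemma poch_bound:
  assumes "n \<ge> 1"
  shows "pochhammer (exp 1) n / fact n \<le> exp 1 * exp ((exp 1 - 1) * (harm n - 1 :: real))"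
  using assms
proof (induction n rule: dec_induct)
  case base
  then show ?case by (simp add: harm_expand)
next
  case (step n)
  let ?e = "exp (1::real)"
  have r: "pochhammer ?e (Suc n) / fact (Suc n) = (pochhammer ?e n / fact n) * ((?e + n) / (n + 1))"
    by (simp add: pochhammer_rec' field_simps)
  have "(?e + n) / (n + 1) = 1 + (?e - 1) / (n+1)" by (simp add: field_simps)
  also have "\<dots> \<le> exp ((?e - 1) / (n+1))" by (rule exp_ge_add_one_self_aux[THEN order_trans]) (simp_all add: exp_ge_add_one_self)
  finally have f: "(?e + n) / (n + 1) \<le> exp ((?e - 1) / (n+1))" .
  have nn: "0 \<le> (?e + n) / (n + 1)" by (simp add: add_nonneg_nonneg)
  have "pochhammer ?e (Suc n) / fact (Suc n) \<le> (?e * exp ((?e - 1) * (harm n - 1))) * exp ((?e - 1) / (n+1))"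
    unfolding r by (rule mult_mono[OF step.IH f]) (simp_all add: pochhammer_pos)
  also have "\<dots> = ?e * exp ((?e - 1) * (harm (Suc n) - 1))"
  proof -
    have "(?e - 1) * (harm (Suc n) - 1) = (?e - 1) * (harm n - 1) + (?e - 1) / (n+1)"
      by (simp add: harm_Suc algebra_simps inverse_eq_divide)
    then show ?thesis by (simp add: exp_add)
  qed
  finally show ?case .
qed

theorem lemma5p2:
  fixes n M1 M :: nat
  assumes "n \<ge> 2" and "M1 \<ge> 1"
    and "int M = \<lceil>exp 1 * (ln (real (n - 1)) + euler_mascheroni)\<rceil> + int M1"
  shows "(\<Sum>m = M + 1..n. real (stirling n m) / fact n) \<le> exp (- real M1)"
proof -
  let ?e = "exp (1::real)"
  define L where "L = ln (real (n - 1))"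
  have L0: "L \<ge> 0" using assms(1) by (simp add: L_def)
  have MM: "real M - real M1 \<ge> ?e * (L + euler_mascheroni)"
  proof -
    have "real_of_int (int M) \<ge> ?e * (L + euler_mascheroni) + real M1"
      using assms(3) L_def by (metis add_le_cancel_right le_of_int_ceiling of_int_add of_int_of_nat_eq)
    then show ?thesis by simp
  qed
  have s1: "(\<Sum>m = M + 1..n. real (stirling n m)) \<le> pochhammer ?e n / ?e ^ (M+1)"
  proof -
    have "(\<Sum>m = M + 1..n. real (stirling n m)) \<le> (\<Sum>m = M + 1..n. real (stirling n m) * ?e ^ m / ?e ^ (M+1))"
    proof (rule sum_mono)
      fix m assume "m \<in> {M+1..n}"
      then have "?e ^ (M+1) \<le> ?e ^ m" by (intro power_increasing) auto
      then have "1 \<le> ?e ^ m / ?e ^ (M+1)" by simp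
      then show "real (stirling n m) \<le> real (stirling n m) * ?e ^ m / ?e ^ (M+1)"
        using mult_left_mono[of 1 "?e ^ m / ?e ^ (M+1)" "real (stirling n m)"] by simp
    qed
    also have "\<dots> \<le> (\<Sum>m\<le>n. real (stirling n m) * ?e ^ m / ?e ^ (M+1))"
      by (rule sum_mono2) auto
    also have "\<dots> = pochhammer ?e n / ?e ^ (M+1)"
      by (simp add: sum_divide_distrib[symmetric] stirling_pochhammer)
    finally show ?thesis .
  qed
  have h: "harm n - 1 \<le> L + 1/2"
  proof -
    obtain k where k: "n = Suc k" "k \<ge> 1" using assms(1) by (cases n) auto
    have "harm k - ln (real k) \<le> harm 1 - ln (real (1::nat))"
      using euler_mascheroni_sequence_decreasing[of 1 k] k by simp
    then have "harm k \<le> L + 1" using k by (simp add: L_def harm_expand)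
    moreover have "inverse (real (Suc k)) \<le> 1/2" using k by (simp add: field_simps)
    ultimately show ?thesis using k by (simp add: harm_Suc)
  qed
  have e3: "?e \<le> 3" using exp_le by simp
  have e2: "?e \<ge> 2" using exp_ge_add_one_self[of 1] by simp
  have g: "euler_mascheroni > (19/33::real)" by (rule euler_mascheroni_gt_19_over_33)
  have key: "1 + (?e - 1) * (harm n - 1) - real (M+1) \<le> - real M1"
  proof -
    have "(?e - 1) * (harm n - 1) \<le> (?e - 1) * (L + 1/2)"
      using h e2 by (intro mult_left_mono) auto
    also have "\<dots> \<le> ?e * (L + euler_mascheroni)"
    proof -
      have a: "(?e - 1) * L \<le> ?e * L" using L0 by (simp add: algebra_simps)
      have b: "(?e - 1) * (1/2) \<le> ?e * euler_mascheroni"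
      proof -
        have "(?e - 1) * (1/2) \<le> 1" using e3 by simp
        also have "1 \<le> 2 * (euler_mascheroni::real)" using g by simp
        also have "\<dots> \<le> ?e * euler_mascheroni" using e2 g by (intro mult_right_mono) auto
        finally show ?thesis .
      qed
      show ?thesis using a b by (simp add: algebra_simps)
    qed
    finally show ?thesis using MM by simp
  qed
  have "(\<Sum>m = M + 1..n. real (stirling n m) / fact n) = (\<Sum>m = M + 1..n. real (stirling n m)) / fact n"
    by (simp add: sum_divide_distrib)
  also have "\<dots> \<le> (pochhammer ?e n / ?e ^ (M+1)) / fact n"
    by (rule divide_right_mono[OF s1]) simp
  also have "\<dots> = (pochhammer ?e n / fact n) / ?e ^ (M+1)" by simp
  also have "\<dots> \<le> (?e * exp ((?e - 1) * (harm n - 1))) / ?e ^ (M+1)"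
    by (rule divide_right_mono[OF poch_bound]) (use assms(1) in simp_all)
  also have "\<dots> = exp (1 + (?e - 1) * (harm n - 1) - real (M+1))"
    by (simp add: exp_add exp_diff exp_of_nat_mult[symmetric])
  also have "\<dots> \<le> exp (- real M1)" using key by simp
  finally show ?thesis .
qed

end
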